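(* Let $(\mathcal V,\mathcal W,\lambda)$ be a FTvN system with center $C$. Then $\lambda(C)=\lambda(\mathcal V)\cap-\lambda(\mathcal V)$, i.e., $\lambda(C)$ is the lineality space of the convex cone $\lambda(\mathcal V)$. Consequently: (a) $\lambda(\mathcal V)$ is pointed if and only if $C=\{0\}$; (b) $\lambda(\mathcal V)$ is a linear subspace of $\mathcal W$ if and only if $C=\mathcal V$.
   Context: A Fan-Theobald-von Neumann (FTvN) system is a triple $(\mathcal V,\mathcal W,\lambda)$ where $\mathcal V,\mathcal W$ are real inner product spaces and $\lambda:\mathcal V\to\mathcal W$ is a map such that: (A1) $\|\lambda(x)\|=\|x\|$ for all $x$; (A2) $\langle x,y\rangle\le\langle\lambda(x),\lambda(y)\rangle$ for all $x,y$; (A3) for every $c\in\mathcal V$ and $q\in\lambda(\mathcal V)$ there exists $x$ with $\lambda(x)=q$ and $\langle c,x\rangle=\langle\lambda(c),\lambda(x)\rangle$. Elements $x,y$ commute if $\langle x,y\rangle=\langle\lambda(x),\lambda(y)\rangle$; the center $C$ is the set of elements commuting with every element of $\mathcal V$. A cone $K$ is pointed if $K\cap -K=\{0\}$. *)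

theory Defs
  imports "HOL-Analysis.Analysis"
begin

definition FTvN :: "('v::real_inner \<Rightarrow> 'w::real_inner) \<Rightarrow> bool" where
  "FTvN lam \<longleftrightarrow>
     (\<forall>x. norm (lam x) = norm x) \<and>
     (\<forall>x y. inner x y \<le> inner (lam x) (lam y)) \<and>
     (\<forall>c. \<forall>q \<in> range lam. \<exists>x. lam x = q \<and> inner c x = inner (lam c) (lam x))"

definition commute :: "('v::real_inner \<Rightarrow> 'w::real_inner) \<Rightarrow> 'v \<Rightarrow> 'v \<Rightarrow> bool" where
  "commute lam x y \<longleftrightarrow> inner x y = inner (lam x) (lam y)"

definition center :: "('v::real_inner \<Rightarrow> 'w::real_inner) \<Rightarrow> 'v set" where
  "center lam = {c. \<forall>x. commute lam c x}"

definition pointed :: "'a::real_vector set \<Rightarrow> bool" where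
  "pointed K \<longleftrightarrow> K \<inter> uminus ` K = {0}"

end

theory Submission
  imports Defs
begin

lemma inner_self_nn:
  fixes a :: "'a::real_inner"
  shows "inner a a = norm a * norm a"
  by (metis power2_norm_eq_inner power2_eq_square)

lemma neg_of_inner:
  fixes a b :: "'a::real_inner"
  assumes "norm a = norm b" "inner a b = - (norm a * norm a)"
  shows "b = - a"
proof -
  have "inner (a + b) (a + b) = inner a a + inner a b + inner b a + inner b b"
    by (simp add: inner_add_left inner_add_right)
  also have "\<dots> = 0" using assms by (simp add: inner_commute[of b a] inner_self_nn)
  finally have "a + b = 0" by simp
  then show ?thesis by (simp add: add_eq_0_iff2)
qed

lemma ftvn_parts:
  assumes "FTvN lam"
  shows "\<And>x. norm (lam x) = norm x" "\<And>x y. inner x y \<le> inner (lam x) (lam y)"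
    "\<And>c q. q \<in> range lam \<Longrightarrow> \<exists>x. lam x = q \<and> inner c x = inner (lam c) (lam x)"
  using assms unfolding FTvN_def by blast+

lemma center_iff:
  assumes F: "FTvN lam"
  shows "x \<in> center lam \<longleftrightarrow> - lam x \<in> range lam"
proof
  assume "x \<in> center lam"
  then have "inner x (-x) = inner (lam x) (lam (-x))"
    unfolding center_def commute_def by blast
  then have "inner (lam x) (lam (-x)) = - (norm (lam x) * norm (lam x))"
    using ftvn_parts(1)[OF F, of x] by (simp add: inner_self_nn)
  moreover have "norm (lam x) = norm (lam (-x))"
    using ftvn_parts(1)[OF F, of x] ftvn_parts(1)[OF F, of "-x"] by simp
  ultimately have "lam (-x) = - lam x"
    using neg_of_inner[of "lam x" "lam (-x)"] by blast
  then show "- lam x \<in> range lam" by (metis rangeI)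
next
  assume "- lam x \<in> range lam"
  then obtain z where z: "lam z = - lam x" "inner x z = inner (lam x) (lam z)"
    using ftvn_parts(3)[OF F, of "- lam x" x] by blast
  have "inner x z = - (norm x * norm x)"
    using z ftvn_parts(1)[OF F, of x] by (simp add: inner_self_nn)
  moreover have "norm x = norm z"
    using z ftvn_parts(1)[OF F, of x] ftvn_parts(1)[OF F, of z] by simp
  ultimately have "z = - x"
    using neg_of_inner[of x z] by blast
  then have nx: "lam (-x) = - lam x" using z by simp
  show "x \<in> center lam"
    unfolding center_def commute_def
  proof (intro CollectI allI antisym)
    fix y
    show "inner x y \<le> inner (lam x) (lam y)" using ftvn_parts(2)[OF F] .
    have "inner (-x) y \<le> inner (lam (-x)) (lam y)" using ftvn_parts(2)[OF F] .
    then show "inner (lam x) (lam y) \<le> inner x y" using nx by simp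
  qed
qed

lemma linear_of_inner:
  fixes lam :: "'v::real_inner \<Rightarrow> 'w::real_inner"
  assumes h: "\<And>a b. inner (lam a) (lam b) = inner a b"
  shows "linear lam"
proof (rule linearI)
  fix x y
  define d where "d = lam (x + y) - lam x - lam y"
  have o: "\<And>z. inner d (lam z) = 0"
    unfolding d_def by (simp add: inner_diff_left h inner_add_left)
  have "inner d d = inner d (lam (x + y)) - inner d (lam x) - inner d (lam y)"
    unfolding d_def[of] by (simp only: inner_diff_right[symmetric])
  then have "inner d d = 0" using o by simp
  then have "d = 0" by simp
  then show "lam (x + y) = lam x + lam y" unfolding d_def by (simp add: algebra_simps)
next
  fix r :: real and x
  define d where "d = lam (r *\<^sub>R x) - r *\<^sub>R lam x"
  have o: "\<And>z. inner d (lam z) = 0"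
    unfolding d_def by (simp add: inner_diff_left h)
  have "inner d d = inner d (lam (r *\<^sub>R x)) - r * inner d (lam x)"
    by (simp add: d_def inner_diff_right)
  then have "inner d d = 0" using o by simp
  then have "d = 0" by simp
  then show "lam (r *\<^sub>R x) = r *\<^sub>R lam x" unfolding d_def by simp
qed

theorem corollary6p4:
  fixes lam :: "'v::real_inner \<Rightarrow> 'w::real_inner"
  assumes "FTvN lam"
  shows "lam ` center lam = range lam \<inter> uminus ` range lam \<and>
         (pointed (range lam) \<longleftrightarrow> center lam = {0}) \<and>
         (subspace (range lam) \<longleftrightarrow> center lam = UNIV)"
proof -
  note F = assms
  have C: "\<And>x. x \<in> center lam \<longleftrightarrow> - lam x \<in> range lam" using center_iff[OF F] .
  have P1: "lam ` center lam = range lam \<inter> uminus ` range lam"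
  proof
    show "lam ` center lam \<subseteq> range lam \<inter> uminus ` range lam"
    proof
      fix q assume "q \<in> lam ` center lam"
      then obtain c where c: "c \<in> center lam" "q = lam c" by blast
      then have "- lam c \<in> range lam" using C by blast
      then have "q \<in> uminus ` range lam" using c by (metis image_eqI minus_minus)
      then show "q \<in> range lam \<inter> uminus ` range lam" using c by blast
    qed
  next
    show "range lam \<inter> uminus ` range lam \<subseteq> lam ` center lam"
    proof
      fix q assume q: "q \<in> range lam \<inter> uminus ` range lam"
      then obtain u w where u: "q = lam u" "q = - lam w" by blast
      then have "- lam u \<in> range lam" by (metis minus_minus rangeI)
      then have "u \<in> center lam" using C by blast
      then show "q \<in> lam ` center lam" using u by blast
    qed
  qed
  have l0: "lam 0 = 0" using ftvn_parts(1)[OF F, of 0] by simp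
  have lz: "\<And>c. lam c = 0 \<longleftrightarrow> c = 0" using ftvn_parts(1)[OF F] by (metis norm_eq_zero)
  have c0: "0 \<in> center lam" using C l0 by (metis minus_zero rangeI)
  have P2: "pointed (range lam) \<longleftrightarrow> center lam = {0}"
  proof -
    have "pointed (range lam) \<longleftrightarrow> lam ` center lam = {0}" unfolding pointed_def P1 ..
    also have "\<dots> \<longleftrightarrow> center lam = {0}"
      using lz c0 l0 by auto
    finally show ?thesis .
  qed
  have P3: "subspace (range lam) \<longleftrightarrow> center lam = UNIV"
  proof
    assume "subspace (range lam)"
    then have "\<And>x. - lam x \<in> range lam" by (simp add: subspace_neg)
    then show "center lam = UNIV" using C by blast
  next
    assume "center lam = UNIV"
    then have "\<And>a b. inner (lam a) (lam b) = inner a b"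
      unfolding center_def commute_def by (metis (mono_tags, lifting) UNIV_I mem_Collect_eq)
    then have L: "linear lam" by (rule linear_of_inner)
    show "subspace (range lam)" using linear_subspace_image[OF L subspace_UNIV] .
  qed
  show ?thesis using P1 P2 P3 by blast
qed

end
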